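(* Let $E=\{x:\langle Ax,x\rangle=1\}$, $A=\operatorname{diag}(1/a_1^2,1/a_2^2)$, be an ellipse. For an $n$-periodic billiard trajectory $P=(p_1,\dots,p_n)$ in $E$ with unit side vectors $u_i=(p_{i+1}-p_i)/|p_{i+1}-p_i|$, set $J(P)=-\langle u_1,Ap_1\rangle$. Then $J(P)$ is constant as $P$ varies in a 1-parameter family of $n$-periodic billiard trajectories in $E$.
   Context: An $n$-periodic billiard trajectory in the ellipse $E$ is a closed polygon $P=(p_1,\dots,p_n)$ (indices mod $n$) with all $p_i\in E$ that obeys the law of reflection at every vertex. All sides of such a trajectory are tangent to a common conic confocal with $E$ (the caustic). A 1-parameter family of $n$-periodic billiard trajectories is a continuous family of such polygons all tangent to the same confocal caustic. *)

theory Defs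
  imports "HOL-Analysis.Analysis"
begin

definition Amat :: "real \<Rightarrow> real \<Rightarrow> real^2 \<Rightarrow> real^2" where
  "Amat a1 a2 x = (\<chi> i. if i = 1 then x$1 / a1\<^sup>2 else x$2 / a2\<^sup>2)"

definition ellipse :: "real \<Rightarrow> real \<Rightarrow> (real^2) set" where
  "ellipse a1 a2 = {x. Amat a1 a2 x \<bullet> x = 1}"

text \<open>Polygons are functions nat => real^2, vertex i meaning p (i mod n);
  vertices are indexed 0..n-1 (the paper's p_1 is our p 0).\<close>

definition vtx :: "nat \<Rightarrow> (nat \<Rightarrow> real^2) \<Rightarrow> nat \<Rightarrow> real^2" where
  "vtx n p i = p (i mod n)"

definition side_dir :: "nat \<Rightarrow> (nat \<Rightarrow> real^2) \<Rightarrow> nat \<Rightarrow> real^2" where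
  "side_dir n p i = (1 / norm (vtx n p (Suc i) - vtx n p i)) *\<^sub>R (vtx n p (Suc i) - vtx n p i)"

text \<open>Law of reflection at vertex p_i: the outgoing direction u_i is the mirror image
  of the incoming direction u_{i-1} in the tangent line of E at p_i, whose normal is A p_i.\<close>
definition reflection_law :: "real \<Rightarrow> real \<Rightarrow> nat \<Rightarrow> (nat \<Rightarrow> real^2) \<Rightarrow> nat \<Rightarrow> bool" where
  "reflection_law a1 a2 n p i \<longleftrightarrow>
     (let N = Amat a1 a2 (vtx n p i); v = side_dir n p (i + n - 1) in
      side_dir n p i = v - (2 * (v \<bullet> N) / (N \<bullet> N)) *\<^sub>R N)"

definition periodic_billiard :: "real \<Rightarrow> real \<Rightarrow> nat \<Rightarrow> (nat \<Rightarrow> real^2) \<Rightarrow> bool" where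
  "periodic_billiard a1 a2 n p \<longleftrightarrow>
     n \<ge> 1 \<and>
     (\<forall>i<n. p i \<in> ellipse a1 a2) \<and>
     (\<forall>i<n. vtx n p (Suc i) \<noteq> vtx n p i) \<and>
     (\<forall>i<n. reflection_law a1 a2 n p i)"

definition Bmat :: "real \<Rightarrow> real \<Rightarrow> real \<Rightarrow> real^2 \<Rightarrow> real^2" where
  "Bmat a1 a2 lam x = (\<chi> i. if i = 1 then x$1 / (a1\<^sup>2 - lam) else x$2 / (a2\<^sup>2 - lam))"

definition confocal_conic :: "real \<Rightarrow> real \<Rightarrow> real \<Rightarrow> (real^2) set" where
  "confocal_conic a1 a2 lam = {x. Bmat a1 a2 lam x \<bullet> x = 1}"

definition confocal_param :: "real \<Rightarrow> real \<Rightarrow> real \<Rightarrow> bool" where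
  "confocal_param a1 a2 lam \<longleftrightarrow> lam \<noteq> a1\<^sup>2 \<and> lam \<noteq> a2\<^sup>2"

definition tangent_line :: "real \<Rightarrow> real \<Rightarrow> real \<Rightarrow> real^2 \<Rightarrow> real^2 \<Rightarrow> bool" where
  "tangent_line a1 a2 lam p q \<longleftrightarrow>
     (\<exists>c \<in> confocal_conic a1 a2 lam. (\<exists>s::real. c = p + s *\<^sub>R (q - p)) \<and>
         (q - p) \<bullet> Bmat a1 a2 lam c = 0)"

definition sides_tangent_to :: "real \<Rightarrow> real \<Rightarrow> real \<Rightarrow> nat \<Rightarrow> (nat \<Rightarrow> real^2) \<Rightarrow> bool" where
  "sides_tangent_to a1 a2 lam n p \<longleftrightarrow>
     (\<forall>i<n. tangent_line a1 a2 lam (vtx n p i) (vtx n p (Suc i)))"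

definition billiard_family :: "real \<Rightarrow> real \<Rightarrow> nat \<Rightarrow> real set \<Rightarrow> (real \<Rightarrow> nat \<Rightarrow> real^2) \<Rightarrow> bool" where
  "billiard_family a1 a2 n I P \<longleftrightarrow>
     connected I \<and>
     (\<forall>i<n. continuous_on I (\<lambda>t. P t i)) \<and>
     (\<forall>t\<in>I. periodic_billiard a1 a2 n (P t)) \<and>
     (\<exists>lam. confocal_param a1 a2 lam \<and> (\<forall>t\<in>I. sides_tangent_to a1 a2 lam n (P t)))"

definition Jinv :: "real \<Rightarrow> real \<Rightarrow> nat \<Rightarrow> (nat \<Rightarrow> real^2) \<Rightarrow> real" where
  "Jinv a1 a2 n p = - (side_dir n p 0 \<bullet> Amat a1 a2 (vtx n p 0))"

end

theory Submission imports Defs begin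

lemma inner2: "(x::real^2) \<bullet> y = x$1*y$1 + x$2*y$2"
  by (simp add: inner_vec_def sum_2)

lemma Amat1: "Amat a b x $ 1 = x$1/a\<^sup>2" and Amat2: "Amat a b x $ 2 = x$2/b\<^sup>2"
  by (simp_all add: Amat_def)
lemma Bmat1: "Bmat a b l x $ 1 = x$1/(a\<^sup>2-l)" and Bmat2: "Bmat a b l x $ 2 = x$2/(b\<^sup>2-l)"
  by (simp_all add: Bmat_def)

lemma disc:
  fixes ee ff gg ss :: real
  assumes "ee + ss * ff = 0" "gg + 2 * ss * ee + ss^2*ff = 1"
  shows "ee^2 = ff*(gg-1)"
proof -
  have "ee = - ss * ff" using assms(1) by linarith
  then show ?thesis using assms(2) by (simp add: algebra_simps power2_eq_square)
qed

lemma key: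
  fixes a b l x y du dv :: real
  assumes "a>0" "b>0" "l \<noteq> a^2" "l \<noteq> b^2" "x^2/a^2+y^2/b^2=1"
    and "(x*du/(a^2-l) + y*dv/(b^2-l))^2 = (du^2/(a^2-l)+dv^2/(b^2-l))*(x^2/(a^2-l)+y^2/(b^2-l)-1)"
  shows "(x*du/a^2+y*dv/b^2)^2 = l*(du^2+dv^2)/(a^2*b^2)"
proof -
  define \<alpha> where "\<alpha> = a^2-l"
  define \<beta> where "\<beta> = b^2-l"
  have al: "\<alpha> \<noteq> 0" "\<beta> \<noteq> 0" using assms unfolding \<alpha>_def \<beta>_def by auto
  have e: "x^2*b^2 + y^2*a^2 = a^2*b^2" using assms(1,2,5) by (simp add: field_simps)
  have h: "(x*du*\<beta> + y*dv*\<alpha>)^2 = (du^2*\<beta>+dv^2*\<alpha>)*(x^2*\<beta>+y^2*\<alpha>-\<alpha>*\<beta>)"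
  proof -
    have a1: "(x*du/\<alpha> + y*dv/\<beta>)*(\<alpha>*\<beta>) = x*du*\<beta> + y*dv*\<alpha>"
      using al by (simp add: field_simps)
    have a2: "(du^2/\<alpha>+dv^2/\<beta>)*(\<alpha>*\<beta>) = du^2*\<beta>+dv^2*\<alpha>"
      using al by (simp add: field_simps)
    have a3: "(x^2/\<alpha>+y^2/\<beta>-1)*(\<alpha>*\<beta>) = x^2*\<beta>+y^2*\<alpha>-\<alpha>*\<beta>"
      using al by (simp add: field_simps)
    have "((x*du/\<alpha> + y*dv/\<beta>)*(\<alpha>*\<beta>))^2 = ((du^2/\<alpha>+dv^2/\<beta>)*(\<alpha>*\<beta>))*((x^2/\<alpha>+y^2/\<beta>-1)*(\<alpha>*\<beta>))"
      using assms(6) unfolding \<alpha>_def[symmetric] \<beta>_def[symmetric] by (simp add: power_mult_distrib power2_eq_square)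
    then show ?thesis unfolding a1 a2 a3 .
  qed
  have h2: "(x*du*\<beta> + y*dv*\<alpha>)^2 - (du^2*\<beta>+dv^2*\<alpha>)*(x^2*\<beta>+y^2*\<alpha>-\<alpha>*\<beta>)
     = \<alpha>*\<beta>*(du^2*\<beta>+dv^2*\<alpha> - (du*y-dv*x)^2)"
    by (simp add: algebra_simps power2_eq_square)
  have h3: "du^2*\<beta>+dv^2*\<alpha> - (du*y-dv*x)^2 = 0" using h h2 al by simp
  have h4: "(du^2*b^2 + dv^2*a^2 - (du*y-dv*x)^2)*(a^2*b^2) = (x*du*b^2+y*dv*a^2)^2"
  proof -
    have "(du^2*b^2 + dv^2*a^2)*(a^2*b^2) = du^2*b^2*(x^2*b^2 + y^2*a^2) + dv^2*a^2*(x^2*b^2 + y^2*a^2)"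
      using e by (simp add: algebra_simps)
    then show ?thesis by (simp add: algebra_simps power2_eq_square)
  qed
  have h5: "du^2*b^2 + dv^2*a^2 - (du*y-dv*x)^2 = l*(du^2+dv^2)"
    using h3 unfolding \<alpha>_def \<beta>_def by (simp add: algebra_simps)
  have q: "x*du/a^2+y*dv/b^2 = (x*du*b^2+y*dv*a^2)/(a^2*b^2)"
    using assms(1,2) by (simp add: field_simps)
  have "(x*du/a^2+y*dv/b^2)^2 = (x*du*b^2+y*dv*a^2)^2/(a^2*b^2)^2"
    unfolding q by (simp add: power_divide)
  also have "\<dots> = (l*(du^2+dv^2))*(a^2*b^2)/(a^2*b^2)^2"
    using h4 h5 by simp
  also have "\<dots> = l*(du^2+dv^2)/(a^2*b^2)"
    using assms(1,2) by (simp add: power2_eq_square)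
  finally show ?thesis .
qed


lemma jsq:
  assumes "a>0" "b>0" "confocal_param a b l" "p \<in> ellipse a b" "q \<noteq> p" "tangent_line a b l p q"
  shows "((1/norm(q-p)) *\<^sub>R (q-p) \<bullet> Amat a b p)^2 = l/(a^2*b^2)"
proof -
  obtain c s where cc: "c \<in> confocal_conic a b l" and cs: "c = p + s *\<^sub>R (q - p)"
    and ct: "(q - p) \<bullet> Bmat a b l c = 0"
    using assms(6) unfolding tangent_line_def by blast
  define d where "d = q - p"
  define x where "x = p$1"
  define y where "y = p$2"
  define du where "du = d$1"
  define dv where "dv = d$2"
  have al: "a^2 - l \<noteq> 0" "b^2 - l \<noteq> 0" using assms(3) unfolding confocal_param_def by auto
  have ell: "x^2/a^2+y^2/b^2=1" using assms(4) unfolding ellipse_def x_def y_def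
    by (simp add: inner2 Amat1 Amat2 power2_eq_square)
  have c1: "c$1 = x + s*du" and c2: "c$2 = y + s*dv"
    unfolding cs x_def y_def du_def dv_def d_def by simp_all
  define e where "e = x*du/(a^2-l) + y*dv/(b^2-l)"
  define f where "f = du^2/(a^2-l)+dv^2/(b^2-l)"
  define g where "g = x^2/(a^2-l)+y^2/(b^2-l)"
  have e1: "e + s * f = 0"
  proof -
    have "0 = du*((x + s*du)/(a^2-l)) + dv*((y + s*dv)/(b^2-l))"
      using ct unfolding d_def[symmetric] by (simp add: inner2 Bmat1 Bmat2 c1 c2 du_def dv_def)
    also have "\<dots> = e + s * f" unfolding e_def f_def
      by (simp add: algebra_simps add_divide_distrib power2_eq_square)
    finally show ?thesis by simp
  qed
  have e2: "g + 2 * s * e + s^2 * f = 1"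
  proof -
    have "1 = (x + s*du)/(a^2-l)*(x + s*du) + (y + s*dv)/(b^2-l)*(y + s*dv)"
      using cc unfolding confocal_conic_def by (simp add: inner2 Bmat1 Bmat2 c1 c2)
    also have "\<dots> = g + 2 * s * e + s^2 * f" unfolding e_def f_def g_def
      by (simp add: algebra_simps add_divide_distrib power2_eq_square)
    finally show ?thesis by simp
  qed
  have "e^2 = f*(g-1)" using disc[OF e1 e2] .
  then have k: "(x*du/a^2+y*dv/b^2)^2 = l*(du^2+dv^2)/(a^2*b^2)"
    using key[OF assms(1,2) _ _ ell] al unfolding e_def f_def g_def by auto
  have nd: "(norm d)^2 = du^2+dv^2" unfolding power2_norm_eq_inner
    by (simp add: inner2 du_def dv_def power2_eq_square)
  have dn: "norm d \<noteq> 0" using assms(5) unfolding d_def by simp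
  have pos: "du^2+dv^2 \<noteq> 0" by (metis nd dn zero_eq_power2)
  have "((1/norm(q-p)) *\<^sub>R (q-p) \<bullet> Amat a b p)^2 = (x*du/a^2+y*dv/b^2)^2 / (norm d)^2"
  proof -
    have "(1/norm d) *\<^sub>R d \<bullet> Amat a b p = (x*du/a^2+y*dv/b^2)/norm d"
      using dn by (simp add: inner2 Amat1 Amat2 x_def y_def du_def dv_def field_simps)
    then show ?thesis unfolding d_def[symmetric] by (simp only: power_divide)
  qed
  also have "\<dots> = l/(a^2*b^2)" unfolding k nd using pos by simp
  finally show ?thesis .
qed


lemma Jinv_alt:
  assumes "n \<ge> 1"
  shows "Jinv a1 a2 n p = - ((1/norm(p (1 mod n) - p 0)) *\<^sub>R (p (1 mod n) - p 0) \<bullet> Amat a1 a2 (p 0))"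
  using assms unfolding Jinv_def side_dir_def vtx_def by simp

lemma Jinv_comp:
  assumes "n \<ge> 1"
  shows "Jinv a1 a2 n p = - (((p (1 mod n) - p 0)$1 * (p 0$1) / a1^2 + (p (1 mod n) - p 0)$2 * (p 0$2)/a2^2)
           / norm(p (1 mod n) - p 0))"
  unfolding Jinv_alt[OF assms] by (simp add: inner2 Amat1 Amat2 divide_simps)

theorem corollary2p2:
  fixes a1 a2 :: real and n :: nat and I :: "real set" and P :: "real \<Rightarrow> nat \<Rightarrow> real^2"
  assumes "a1 > 0" and "a2 > 0"
    and "billiard_family a1 a2 n I P"
    and "s \<in> I" and "t \<in> I"
  shows "Jinv a1 a2 n (P s) = Jinv a1 a2 n (P t)"
proof (rule ccontr)
  assume ne: "Jinv a1 a2 n (P s) \<noteq> Jinv a1 a2 n (P t)"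
  define J where "J t = Jinv a1 a2 n (P t)" for t
  obtain lam where conn: "connected I" and cont: "\<forall>i<n. continuous_on I (\<lambda>t. P t i)"
    and pb: "\<forall>t\<in>I. periodic_billiard a1 a2 n (P t)"
    and conf: "confocal_param a1 a2 lam" and tang: "\<forall>t\<in>I. sides_tangent_to a1 a2 lam n (P t)"
    using assms(3) unfolding billiard_family_def by blast
  have n1: "n \<ge> 1" using pb assms(4) unfolding periodic_billiard_def by blast
  have m: "1 mod n < n" using n1 by simp
  have sq: "(J u)^2 = lam/(a1^2*a2^2)" if u: "u \<in> I" for u
  proof -
    have pbu: "periodic_billiard a1 a2 n (P u)" using pb u by blast
    have v0: "vtx n (P u) 0 = P u 0" and v1: "vtx n (P u) (Suc 0) = P u (1 mod n)"
      unfolding vtx_def by simp_all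
    have e: "P u 0 \<in> ellipse a1 a2" using pbu n1 unfolding periodic_billiard_def by auto
    have d: "P u (1 mod n) \<noteq> P u 0" using pbu n1 v0 v1 unfolding periodic_billiard_def
      by (metis less_le_trans zero_less_one)
    have tg: "tangent_line a1 a2 lam (P u 0) (P u (1 mod n))"
      using tang u n1 v0 v1 unfolding sides_tangent_to_def
      by (metis less_le_trans zero_less_one)
    show ?thesis unfolding J_def Jinv_alt[OF n1] using jsq[OF assms(1,2) conf e d tg]
      by simp
  qed
  have contJ: "continuous_on I J"
  proof -
    have c0: "continuous_on I (\<lambda>t. P t 0)" using cont n1 by simp
    have c1: "continuous_on I (\<lambda>t. P t (1 mod n))" using cont m by simp
    have nz: "\<forall>u\<in>I. norm (P u (1 mod n) - P u 0) \<noteq> 0"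
    proof
      fix u assume u: "u \<in> I"
      have pbu: "periodic_billiard a1 a2 n (P u)" using pb u by blast
      have v0: "vtx n (P u) 0 = P u 0" and v1: "vtx n (P u) (Suc 0) = P u (1 mod n)"
        unfolding vtx_def by simp_all
      have "P u (1 mod n) \<noteq> P u 0" using pbu n1 v0 v1 unfolding periodic_billiard_def
        by (metis less_le_trans zero_less_one)
      then show "norm (P u (1 mod n) - P u 0) \<noteq> 0" by simp
    qed
    have eq: "J = (\<lambda>t. - (((P t (1 mod n) - P t 0)$1 * (P t 0$1) / a1^2 + (P t (1 mod n) - P t 0)$2 * (P t 0$2)/a2^2)
           / norm(P t (1 mod n) - P t 0)))"
      unfolding J_def using Jinv_comp[OF n1] by blast
    have "continuous_on I (\<lambda>t. - (((P t (1 mod n) - P t 0)$1 * (P t 0$1) / a1^2 + (P t (1 mod n) - P t 0)$2 * (P t 0$2)/a2^2)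
           / norm(P t (1 mod n) - P t 0)))"
      using assms(1,2) by (intro continuous_intros c0 c1 nz) auto
    then show ?thesis unfolding eq .
  qed
  have Js: "J s = - J t"
  proof -
    have "(J s)^2 = (J t)^2" using sq assms(4,5) by simp
    then show ?thesis using ne unfolding J_def by (metis power2_eq_iff)
  qed
  have Jt: "J t \<noteq> 0" using Js ne unfolding J_def by auto
  have ci: "connected (J ` I)" using connected_continuous_image[OF contJ conn] .
  have iv: "\<forall>x\<in>J`I. \<forall>y\<in>J`I. \<forall>z\<ge>x. z \<le> y \<longrightarrow> z \<in> J`I"
    using ci unfolding connected_iff_interval by blast
  have ab: "J s \<in> J`I" "J t \<in> J`I" using assms(4,5) by auto
  have "0 \<in> J ` I"
  proof (cases "J s \<le> 0")
    case True
    have "0 \<le> J t" using True Js by simp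
    then show ?thesis using iv ab True by blast
  next
    case False
    have "J t \<le> 0" using False Js by simp
    then show ?thesis using iv ab False by auto
  qed
  then obtain w where w: "w \<in> I" "J w = 0" by auto
  have "lam/(a1^2*a2^2) = 0" using sq[OF w(1)] w(2) by simp
  then have "(J t)^2 = 0" using sq[OF assms(5)] by simp
  then show False using Jt by simp
qed

end
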